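(* Fix an integer $k\geq1$ and $V=\{0,\ldots,k\}$. If a Boolean function $\varphi$ on $V$ satisfies $\varphi\simeq\bot$, then $\varphi$ is fragmentable.
   Context: A valuation is a subset $\nu\subseteq V$; $\nu^{(l)}$ is $\nu$ with membership of $l$ flipped. A Boolean function on $V$ is a map $\varphi:2^V\to\{\text{false},\text{true}\}$; $\mathrm{sat}(\varphi)$ is its set of satisfying valuations; $\bot$ is the constant-false function. Write $\varphi\xrightarrow{+(\nu,l)}\varphi'$ if $\nu,\nu^{(l)}\notin\mathrm{sat}(\varphi)$ and $\mathrm{sat}(\varphi')=\mathrm{sat}(\varphi)\cup\{\nu,\nu^{(l)}\}$, and $\varphi\xrightarrow{-(\nu,l)}\varphi'$ if $\varphi'\xrightarrow{+(\nu,l)}\varphi$. Write $\varphi\xrightarrow{\pm}\varphi'$ if one of these holds for some $\nu,l$; $\simeq$ is the reflexive-transitive closure of $\xrightarrow{\pm}$ (an equivalence relation). $\varphi$ is degenerate if there is $l\in V$ with $\varphi(\nu)=\varphi(\nu^{(l)})$ for all $\nu$. Two functions are disjoint if no valuation satisfies both. A $\neg$-$\vee$-template is a Boolean circuit all of whose internal gates are $\neg$- or $\vee$-gates (a single leaf is allowed); its leaves $l_0,\ldots,l_n$ are holes. $T[\varphi_0,\ldots,\varphi_n]$ is obtained by substituting $\varphi_i$ for $l_i$; it is deterministic if, for every $\vee$-gate of the template, distinct inputs compute disjoint functions. $\varphi$ is fragmentable if there exist a template $T$ and degenerate $\varphi_0,\ldots,\varphi_n$ with $T[\varphi_0,\ldots,\varphi_n]$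 deterministic and equivalent to $\varphi$. *)

theory Defs
  imports Main
begin

text \<open>Valuations are subsets of V (here represented as nat sets); a Boolean function on V
is a map from valuations to bool; only its values on subsets of V matter.\<close>

type_synonym bfun = "nat set \<Rightarrow> bool"

definition flip :: "nat set \<Rightarrow> nat \<Rightarrow> nat set" where
  "flip \<nu> l = (if l \<in> \<nu> then \<nu> - {l} else insert l \<nu>)"

definition sat :: "nat set \<Rightarrow> bfun \<Rightarrow> nat set set" where
  "sat V \<phi> = {\<nu>. \<nu> \<subseteq> V \<and> \<phi> \<nu>}"

definition bot_fun :: bfun where
  "bot_fun = (\<lambda>_. False)"

definition plus_step :: "nat set \<Rightarrow> bfun \<Rightarrow> nat set \<Rightarrow> nat \<Rightarrow> bfun \<Rightarrow> bool" where
  "plus_step V \<phi> \<nu> l \<phi>' \<longleftrightarrow> \<nu> \<subseteq> V \<and> l \<in> V \<and>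
     \<nu> \<notin> sat V \<phi> \<and> flip \<nu> l \<notin> sat V \<phi> \<and>
     sat V \<phi>' = sat V \<phi> \<union> {\<nu>, flip \<nu> l}"

definition minus_step :: "nat set \<Rightarrow> bfun \<Rightarrow> nat set \<Rightarrow> nat \<Rightarrow> bfun \<Rightarrow> bool" where
  "minus_step V \<phi> \<nu> l \<phi>' \<longleftrightarrow> plus_step V \<phi>' \<nu> l \<phi>"

definition pm_step :: "nat set \<Rightarrow> bfun \<Rightarrow> bfun \<Rightarrow> bool" where
  "pm_step V \<phi> \<phi>' \<longleftrightarrow> (\<exists>\<nu> l. plus_step V \<phi> \<nu> l \<phi>' \<or> minus_step V \<phi> \<nu> l \<phi>')"

definition bequiv :: "nat set \<Rightarrow> bfun \<Rightarrow> bfun \<Rightarrow> bool" where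
  "bequiv V = (pm_step V)\<^sup>*\<^sup>*"

definition degenerate :: "nat set \<Rightarrow> bfun \<Rightarrow> bool" where
  "degenerate V \<phi> \<longleftrightarrow> (\<exists>l\<in>V. \<forall>\<nu>. \<nu> \<subseteq> V \<longrightarrow> \<phi> \<nu> = \<phi> (flip \<nu> l))"

text \<open>Negation/disjunction templates (circuits unfolded into trees; holes indexed by nat).\<close>
datatype tmpl = Hole nat | Neg tmpl | Or "tmpl list"

fun holes :: "tmpl \<Rightarrow> nat set" where
  "holes (Hole i) = {i}"
| "holes (Neg t) = holes t"
| "holes (Or ts) = (\<Union>t\<in>set ts. holes t)"

fun tsubst :: "tmpl \<Rightarrow> (nat \<Rightarrow> bfun) \<Rightarrow> bfun" where
  "tsubst (Hole i) \<sigma> = \<sigma> i"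
| "tsubst (Neg t) \<sigma> = (\<lambda>\<nu>. \<not> tsubst t \<sigma> \<nu>)"
| "tsubst (Or ts) \<sigma> = (\<lambda>\<nu>. \<exists>t\<in>set ts. tsubst t \<sigma> \<nu>)"

definition disjoint_fun :: "nat set \<Rightarrow> bfun \<Rightarrow> bfun \<Rightarrow> bool" where
  "disjoint_fun V \<phi> \<psi> \<longleftrightarrow> (\<forall>\<nu>. \<nu> \<subseteq> V \<longrightarrow> \<not> (\<phi> \<nu> \<and> \<psi> \<nu>))"

fun deterministic :: "nat set \<Rightarrow> tmpl \<Rightarrow> (nat \<Rightarrow> bfun) \<Rightarrow> bool" where
  "deterministic V (Hole i) \<sigma> = True"
| "deterministic V (Neg t) \<sigma> = deterministic V t \<sigma>"
| "deterministic V (Or ts) \<sigma> =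
     ((\<forall>t\<in>set ts. deterministic V t \<sigma>) \<and>
      (\<forall>i j. i < length ts \<longrightarrow> j < length ts \<longrightarrow> i \<noteq> j \<longrightarrow>
         disjoint_fun V (tsubst (ts ! i) \<sigma>) (tsubst (ts ! j) \<sigma>)))"

definition fragmentable :: "nat set \<Rightarrow> bfun \<Rightarrow> bool" where
  "fragmentable V \<phi> \<longleftrightarrow>
     (\<exists>T \<sigma>. (\<forall>i\<in>holes T. degenerate V (\<sigma> i)) \<and> deterministic V T \<sigma> \<and>
            (\<forall>\<nu>. \<nu> \<subseteq> V \<longrightarrow> tsubst T \<sigma> \<nu> = \<phi> \<nu>))"

end

theory Submission
  imports Defs
begin

fun ren :: "(nat \<Rightarrow> nat) \<Rightarrow> tmpl \<Rightarrow> tmpl" where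
  "ren f (Hole i) = Hole (f i)"
| "ren f (Neg t) = Neg (ren f t)"
| "ren f (Or ts) = Or (map (ren f) ts)"

lemma tsubst_ren: "tsubst (ren f T) \<sigma> = tsubst T (\<sigma> \<circ> f)"
  by (induction T) auto

lemma holes_ren: "holes (ren f T) = f ` holes T"
  by (induction T) auto

lemma det_ren: "deterministic V (ren f T) \<sigma> = deterministic V T (\<sigma> \<circ> f)"
  by (induction T) (auto simp: tsubst_ren comp_def)

lemma frag_deg: "degenerate V \<psi> \<Longrightarrow> fragmentable V \<psi>"
  unfolding fragmentable_def
  by (rule exI[of _ "Hole 0"], rule exI[of _ "\<lambda>_. \<psi>"]) auto

lemma frag_cong: "fragmentable V \<psi> \<Longrightarrow> (\<And>\<nu>. \<nu> \<subseteq> V \<Longrightarrow> \<phi> \<nu> = \<psi> \<nu>) \<Longrightarrow> fragmentable V \<phi>"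
  unfolding fragmentable_def by metis

lemma frag_neg: "fragmentable V a \<Longrightarrow> fragmentable V (\<lambda>\<nu>. \<not> a \<nu>)"
  unfolding fragmentable_def
proof (elim exE conjE)
  fix T \<sigma>
  assume h: "\<forall>i\<in>holes T. degenerate V (\<sigma> i)" "deterministic V T \<sigma>"
    "\<forall>\<nu>. \<nu> \<subseteq> V \<longrightarrow> tsubst T \<sigma> \<nu> = a \<nu>"
  show "\<exists>T \<sigma>. (\<forall>i\<in>holes T. degenerate V (\<sigma> i)) \<and> deterministic V T \<sigma> \<and>
         (\<forall>\<nu>. \<nu> \<subseteq> V \<longrightarrow> tsubst T \<sigma> \<nu> = (\<not> a \<nu>))"
    by (rule exI[of _ "Neg T"], rule exI[of _ \<sigma>]) (use h in auto)
qed

lemma frag_or: "fragmentable V a \<Longrightarrow> fragmentable V b \<Longrightarrow> disjoint_fun V a b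
  \<Longrightarrow> fragmentable V (\<lambda>\<nu>. a \<nu> \<or> b \<nu>)"
  unfolding fragmentable_def
proof (elim exE conjE)
  fix T1 \<sigma>1 T2 \<sigma>2
  assume h1: "\<forall>i\<in>holes T1. degenerate V (\<sigma>1 i)" "deterministic V T1 \<sigma>1"
    "\<forall>\<nu>. \<nu> \<subseteq> V \<longrightarrow> tsubst T1 \<sigma>1 \<nu> = a \<nu>"
  assume h2: "\<forall>i\<in>holes T2. degenerate V (\<sigma>2 i)" "deterministic V T2 \<sigma>2"
    "\<forall>\<nu>. \<nu> \<subseteq> V \<longrightarrow> tsubst T2 \<sigma>2 \<nu> = b \<nu>"
  assume d: "disjoint_fun V a b"
  define \<sigma> where "\<sigma> = (\<lambda>i::nat. if even i then \<sigma>1 (i div 2) else \<sigma>2 (i div 2))"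
  have e1: "\<sigma> \<circ> (\<lambda>i. 2*i) = \<sigma>1" unfolding \<sigma>_def by auto
  have e2: "\<sigma> \<circ> (\<lambda>i. 2*i+1) = \<sigma>2" unfolding \<sigma>_def by auto
  define T where "T = Or [ren (\<lambda>i. 2*i) T1, ren (\<lambda>i. 2*i+1) T2]"
  have t1: "tsubst (ren (\<lambda>i. 2*i) T1) \<sigma> = tsubst T1 \<sigma>1" using e1 by (simp add: tsubst_ren)
  have t2: "tsubst (ren (\<lambda>i. 2*i+1) T2) \<sigma> = tsubst T2 \<sigma>2" using e2 by (simp add: tsubst_ren)
  have hol: "\<forall>i\<in>holes T. degenerate V (\<sigma> i)"
    using h1(1) h2(1) unfolding T_def \<sigma>_def by (auto simp: holes_ren)
  have dis: "disjoint_fun V (tsubst T1 \<sigma>1) (tsubst T2 \<sigma>2)"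
    "disjoint_fun V (tsubst T2 \<sigma>2) (tsubst T1 \<sigma>1)"
    using d h1(3) h2(3) unfolding disjoint_fun_def by auto
  have det: "deterministic V T \<sigma>"
    unfolding T_def using h1(2) h2(2) dis e1 e2 t1 t2
    by (auto simp: det_ren less_Suc_eq nth_Cons')
  show "\<exists>T \<sigma>. (\<forall>i\<in>holes T. degenerate V (\<sigma> i)) \<and> deterministic V T \<sigma> \<and>
         (\<forall>\<nu>. \<nu> \<subseteq> V \<longrightarrow> tsubst T \<sigma> \<nu> = (a \<nu> \<or> b \<nu>))"
    by (rule exI[of _ T], rule exI[of _ \<sigma>]) (use hol det t1 t2 h1(3) h2(3) in \<open>auto simp: T_def\<close>)
qed

lemma flip_flip: "flip (flip \<nu> l) l = \<nu>"
  unfolding flip_def by auto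

lemma flip_sub: "\<nu> \<subseteq> V \<Longrightarrow> l \<in> V \<Longrightarrow> flip \<nu> l \<subseteq> V"
  unfolding flip_def by auto

lemma edge_deg: "l \<in> V \<Longrightarrow> degenerate V (\<lambda>\<mu>. \<mu> = \<nu> \<or> \<mu> = flip \<nu> l)"
  unfolding degenerate_def
proof (rule bexI[of _ l])
  have inj: "flip a l = flip b l \<Longrightarrow> a = b" for a b by (metis flip_flip)
  show "\<forall>\<mu>. \<mu> \<subseteq> V \<longrightarrow> (\<mu> = \<nu> \<or> \<mu> = flip \<nu> l) = (flip \<mu> l = \<nu> \<or> flip \<mu> l = flip \<nu> l)"
    using inj flip_flip by metis
qed

theorem proposition5p8:
  fixes k :: nat and \<phi> :: "nat set \<Rightarrow> bool"
  assumes "k \<ge> 1"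
    and "bequiv {0..k} \<phi> bot_fun"
  shows "fragmentable {0..k} \<phi>"
proof -
  let ?V = "{0..k}"
  have "(pm_step ?V)\<^sup>*\<^sup>* \<phi> bot_fun" using assms(2) unfolding bequiv_def .
  then show ?thesis
  proof (induction rule: converse_rtranclp_induct)
    case base
    show ?case by (rule frag_deg) (auto simp: degenerate_def bot_fun_def)
  next
    case (step \<phi> \<phi>')
    then obtain \<nu> l where s: "plus_step ?V \<phi> \<nu> l \<phi>' \<or> minus_step ?V \<phi> \<nu> l \<phi>'"
      unfolding pm_step_def by blast
    define e where "e = (\<lambda>\<mu>. \<mu> = \<nu> \<or> \<mu> = flip \<nu> l)"
    show ?case
    proof (cases "plus_step ?V \<phi> \<nu> l \<phi>'")
      case True
      hence p: "\<nu> \<subseteq> ?V" "l \<in> ?V" "\<nu> \<notin> sat ?V \<phi>" "flip \<nu> l \<notin> sat ?V \<phi>"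
        "sat ?V \<phi>' = sat ?V \<phi> \<union> {\<nu>, flip \<nu> l}"
        unfolding plus_step_def by auto
      have fs: "flip \<nu> l \<subseteq> ?V" using p flip_sub by blast
      have eq: "\<phi> \<mu> = (\<not> ((\<lambda>\<mu>. \<not> \<phi>' \<mu>) \<mu> \<or> e \<mu>))" if "\<mu> \<subseteq> ?V" for \<mu>
      proof -
        have "\<mu> \<in> sat ?V \<phi>' \<longleftrightarrow> \<mu> \<in> sat ?V \<phi> \<or> e \<mu>" using p(5) unfolding e_def by auto
        moreover have "e \<mu> \<Longrightarrow> \<not> \<phi> \<mu>" using p(3,4) that unfolding e_def sat_def by auto
        ultimately show ?thesis using that unfolding sat_def by auto
      qed
      have dj: "disjoint_fun ?V (\<lambda>\<mu>. \<not> \<phi>' \<mu>) e"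
        using p(5) p(1) fs unfolding disjoint_fun_def e_def sat_def by blast
      show ?thesis
        by (rule frag_cong[OF frag_neg[OF frag_or[OF frag_neg[OF step.IH] frag_deg[OF edge_deg[OF p(2)]]]]])
           (use eq dj e_def in auto)
    next
      case False
      hence "plus_step ?V \<phi>' \<nu> l \<phi>" using s unfolding minus_step_def by blast
      hence p: "\<nu> \<subseteq> ?V" "l \<in> ?V" "\<nu> \<notin> sat ?V \<phi>'" "flip \<nu> l \<notin> sat ?V \<phi>'"
        "sat ?V \<phi> = sat ?V \<phi>' \<union> {\<nu>, flip \<nu> l}"
        unfolding plus_step_def by auto
      have fs: "flip \<nu> l \<subseteq> ?V" using p flip_sub by blast
      have eq: "\<phi> \<mu> = (\<phi>' \<mu> \<or> e \<mu>)" if "\<mu> \<subseteq> ?V" for \<mu>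
      proof -
        have "\<mu> \<in> sat ?V \<phi> \<longleftrightarrow> \<mu> \<in> sat ?V \<phi>' \<or> e \<mu>" using p(5) unfolding e_def by auto
        thus ?thesis using that unfolding sat_def by auto
      qed
      have dj: "disjoint_fun ?V \<phi>' e"
        using p(3,4) p(1) fs unfolding disjoint_fun_def e_def sat_def by blast
      show ?thesis
        by (rule frag_cong[OF frag_or[OF step.IH frag_deg[OF edge_deg[OF p(2)]]]])
           (use eq dj e_def in auto)
    qed
  qed
qed

end
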